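(* Let $d\ge2$, $L\ge1$, $\lambda>0$, let $\mu_0^\star,\mu_1^\star\in\mathbb{S}^{d-1}$ be orthonormal, and let the rows $X_1,\dots,X_L$ of $\mathbb{X}$ be i.i.d. with law $\frac12\delta_{\mu_0^\star}+\frac12\delta_{\mu_1^\star}$. Then for all $\mu_0,\mu_1\in\mathbb{R}^d$, $\mathcal{R}(\mu_0,\mu_1)=\mathcal{R}^<(\kappa_0,\kappa_1,\eta_0,\eta_1)$ where $\mathcal{R}^<:\mathbb{R}^4\to\mathbb{R}$ is $$\mathcal{R}^<(\kappa_0,\kappa_1,\eta_0,\eta_1)=1-\lambda\frac{L+1}{L}(\kappa_0^2+\kappa_1^2+\eta_0^2+\eta_1^2)+\lambda^2\frac{L+3}{2L}\big([\kappa_0^2+\eta_0^2]^2+[\kappa_1^2+\eta_1^2]^2\big)+\lambda^2\frac{L-1}{L}(\kappa_0\eta_1+\kappa_1\eta_0)^2.$$ In addition, if $(\mu_0,\mu_1)\in(\mathbb{S}^{d-1})^2$, then $(\kappa_0,\kappa_1,\eta_0,\eta_1)\in[-1,1]^4$.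
   Context: $\kappa_0=\langle\mu_0^\star,\mu_0\rangle$, $\kappa_1=\langle\mu_1^\star,\mu_1\rangle$, $\eta_0=\langle\mu_1,\mu_0^\star\rangle$, $\eta_1=\langle\mu_0,\mu_1^\star\rangle$. $T^{\mathrm{lin},\mu_0,\mu_1}(\mathbb{X})_\ell=\frac{2}{L}\sum_{k=1}^L\lambda\,X_\ell^\top(\mu_0\mu_0^\top+\mu_1\mu_1^\top)X_k\,X_k$ and $\mathcal{R}(\mu_0,\mu_1)=\frac1L\sum_{\ell=1}^L\mathbb{E}\|X_\ell-T^{\mathrm{lin},\mu_0,\mu_1}(\mathbb{X})_\ell\|_2^2$. *)

theory Defs
  imports "HOL-Analysis.Analysis" "HOL-Probability.Probability"
begin

definition two_point_law :: "'a \<Rightarrow> 'a \<Rightarrow> 'a pmf" where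
  "two_point_law a b = map_pmf (\<lambda>c. if c then b else a) (bernoulli_pmf (1/2))"

definition rows_law :: "nat \<Rightarrow> 'a::zero pmf \<Rightarrow> (nat \<Rightarrow> 'a) pmf" where
  "rows_law L p = Pi_pmf {1..L} 0 (\<lambda>_. p)"

text \<open>T^lin(X)_l = (2/L) sum_k lambda X_l^T (mu0 mu0^T + mu1 mu1^T) X_k X_k,
  with X_l^T (mu0 mu0^T + mu1 mu1^T) X_k written out as
  (X_l . mu0)(mu0 . X_k) + (X_l . mu1)(mu1 . X_k).\<close>
definition T_lin :: "real \<Rightarrow> nat \<Rightarrow> real^'d \<Rightarrow> real^'d \<Rightarrow> (nat \<Rightarrow> real^'d) \<Rightarrow> nat \<Rightarrow> real^'d" where
  "T_lin lam L mu0 mu1 X l =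
     (2 / real L) *\<^sub>R (\<Sum>k\<in>{1..L}.
        (lam * ((X l \<bullet> mu0) * (mu0 \<bullet> X k) + (X l \<bullet> mu1) * (mu1 \<bullet> X k))) *\<^sub>R X k)"

definition risk :: "real \<Rightarrow> nat \<Rightarrow> real^'d \<Rightarrow> real^'d \<Rightarrow> real^'d \<Rightarrow> real^'d \<Rightarrow> real" where
  "risk lam L ms0 ms1 mu0 mu1 =
     (1 / real L) * (\<Sum>l\<in>{1..L}.
        measure_pmf.expectation (rows_law L (two_point_law ms0 ms1))
          (\<lambda>X. (norm (X l - T_lin lam L mu0 mu1 X l))\<^sup>2))"

definition risk_red :: "real \<Rightarrow> nat \<Rightarrow> real \<Rightarrow> real \<Rightarrow> real \<Rightarrow> real \<Rightarrow> real" where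
  "risk_red lam L k0 k1 e0 e1 =
     1 - lam * (real L + 1) / real L * (k0\<^sup>2 + k1\<^sup>2 + e0\<^sup>2 + e1\<^sup>2)
     + lam\<^sup>2 * (real L + 3) / (2 * real L) * ((k0\<^sup>2 + e0\<^sup>2)\<^sup>2 + (k1\<^sup>2 + e1\<^sup>2)\<^sup>2)
     + lam\<^sup>2 * (real L - 1) / real L * (k0 * e1 + k1 * e0)\<^sup>2"

end

theory Submission
  imports Defs
begin

lemma marg2:
  assumes "finite A" "i \<in> A" "j \<in> A" "i \<noteq> j"
  shows "map_pmf (\<lambda>X. (X i, X j)) (Pi_pmf A d (\<lambda>_. p)) = pair_pmf p p"
proof -
  have "Pi_pmf {i,j} d (\<lambda>_. p) = map_pmf (\<lambda>f x. if x \<in> {i,j} then f x else d) (Pi_pmf A d (\<lambda>_. p))"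
    using assms by (intro Pi_pmf_subset) auto
  hence "map_pmf (\<lambda>X. (X i, X j)) (Pi_pmf {i,j} d (\<lambda>_. p)) = map_pmf (\<lambda>X. (X i, X j)) (Pi_pmf A d (\<lambda>_. p))"
    by (simp add: map_pmf_comp)
  moreover have "Pi_pmf {i,j} d (\<lambda>_. p) = map_pmf (\<lambda>(y,f). f(i:=y)) (pair_pmf p (Pi_pmf {j} d (\<lambda>_. p)))"
    using assms Pi_pmf_insert[of "{j}" i d "\<lambda>_. p"] by simp
  ultimately have "map_pmf (\<lambda>X. (X i, X j)) (Pi_pmf A d (\<lambda>_. p)) =
     map_pmf (apsnd (\<lambda>f. f j)) (pair_pmf p (Pi_pmf {j} d (\<lambda>_. p)))"
    using assms by (simp add: map_pmf_comp case_prod_unfold apsnd_def map_prod_def)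
  also have "\<dots> = pair_pmf p (map_pmf (\<lambda>f. f j) (Pi_pmf {j} d (\<lambda>_. p)))"
    by (simp add: pair_map_pmf2)
  also have "\<dots> = pair_pmf p p" by (simp add: Pi_pmf_component)
  finally show ?thesis .
qed

lemma marg3:
  assumes "finite A" "i \<in> A" "j \<in> A" "k \<in> A" "i \<noteq> j" "i \<noteq> k" "j \<noteq> k"
  shows "map_pmf (\<lambda>X. (X i, X j, X k)) (Pi_pmf A d (\<lambda>_. p)) = pair_pmf p (pair_pmf p p)"
proof -
  have "Pi_pmf {i,j,k} d (\<lambda>_. p) = map_pmf (\<lambda>f x. if x \<in> {i,j,k} then f x else d) (Pi_pmf A d (\<lambda>_. p))"
    using assms by (intro Pi_pmf_subset) auto
  hence "map_pmf (\<lambda>X. (X i, X j, X k)) (Pi_pmf {i,j,k} d (\<lambda>_. p)) = map_pmf (\<lambda>X. (X i, X j, X k)) (Pi_pmf A d (\<lambda>_. p))"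
    by (simp add: map_pmf_comp)
  moreover have "Pi_pmf {i,j,k} d (\<lambda>_. p) = map_pmf (\<lambda>(y,f). f(i:=y)) (pair_pmf p (Pi_pmf {j,k} d (\<lambda>_. p)))"
    using assms Pi_pmf_insert[of "{j,k}" i d "\<lambda>_. p"] by simp
  ultimately have "map_pmf (\<lambda>X. (X i, X j, X k)) (Pi_pmf A d (\<lambda>_. p)) =
     map_pmf (apsnd (\<lambda>f. (f j, f k))) (pair_pmf p (Pi_pmf {j,k} d (\<lambda>_. p)))"
    using assms by (simp add: map_pmf_comp case_prod_unfold apsnd_def map_prod_def)
  also have "\<dots> = pair_pmf p (map_pmf (\<lambda>f. (f j, f k)) (Pi_pmf {j,k} d (\<lambda>_. p)))"
    by (simp add: pair_map_pmf2)
  also have "\<dots> = pair_pmf p (pair_pmf p p)" using assms by (subst marg2) auto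
  finally show ?thesis .
qed

lemma tp_set: "set_pmf (two_point_law a b) \<subseteq> {a,b}"
  unfolding two_point_law_def by auto

lemma tp_pmf:
  assumes "a \<noteq> b"
  shows "pmf (two_point_law a b) a = 1/2" "pmf (two_point_law a b) b = 1/2"
proof -
  have "pmf (two_point_law a b) a = measure_pmf.prob (bernoulli_pmf (1/2)) {False}"
    unfolding two_point_law_def pmf_map using assms
    by (intro arg_cong[where f="measure_pmf.prob _"]) auto
  thus "pmf (two_point_law a b) a = 1/2" by (simp add: measure_pmf_single)
  have "pmf (two_point_law a b) b = measure_pmf.prob (bernoulli_pmf (1/2)) {True}"
    unfolding two_point_law_def pmf_map using assms
    by (intro arg_cong[where f="measure_pmf.prob _"]) (auto split: if_splits)
  thus "pmf (two_point_law a b) b = 1/2" by (simp add: measure_pmf_single)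
qed

lemma tpE1:
  assumes "a \<noteq> b"
  shows "measure_pmf.expectation (two_point_law a b) (f::_\<Rightarrow>real) = (f a + f b) / 2"
proof -
  have "measure_pmf.expectation (two_point_law a b) f = (\<Sum>z\<in>{a,b}. f z * pmf (two_point_law a b) z)"
    using tp_set[of a b] by (intro integral_measure_pmf_real) auto
  thus ?thesis using assms by (simp add: tp_pmf)
qed

lemma tpE2:
  assumes "a \<noteq> b"
  shows "measure_pmf.expectation (pair_pmf (two_point_law a b) (two_point_law a b)) (\<lambda>(x,y). (f x y::real))
     = (f a a + f a b + f b a + f b b) / 4"
proof -
  let ?M = "pair_pmf (two_point_law a b) (two_point_law a b)"
  have "measure_pmf.expectation ?M (\<lambda>(x,y). f x y) = (\<Sum>z\<in>{(a,a),(a,b),(b,a),(b,b)}. (case z of (x,y) \<Rightarrow> f x y) * pmf ?M z)"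
    using tp_set[of a b] by (intro integral_measure_pmf_real) auto
  thus ?thesis using assms by (simp add: tp_pmf pmf_pair)
qed

lemma tpE3:
  assumes "a \<noteq> b"
  shows "measure_pmf.expectation (pair_pmf (two_point_law a b) (pair_pmf (two_point_law a b) (two_point_law a b))) (\<lambda>(x,y,z). (f x y z::real))
     = (f a a a + f a a b + f a b a + f a b b + f b a a + f b a b + f b b a + f b b b) / 8"
proof -
  let ?M = "pair_pmf (two_point_law a b) (pair_pmf (two_point_law a b) (two_point_law a b))"
  have sub: "set_pmf ?M \<subseteq> {a,b}\<times>{a,b}\<times>{a,b}" by (simp only: set_pair_pmf) (intro Sigma_mono tp_set)
  have eqs: "{a,b}\<times>{a,b}\<times>{a,b} = {(a,a,a),(a,a,b),(a,b,a),(a,b,b),(b,a,a),(b,a,b),(b,b,a),(b,b,b)}" by auto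
  have "measure_pmf.expectation ?M (\<lambda>(x,y,z). f x y z) = (\<Sum>w\<in>{(a,a,a),(a,a,b),(a,b,a),(a,b,b),(b,a,a),(b,a,b),(b,b,a),(b,b,b)}. (case w of (x,y,z) \<Rightarrow> f x y z) * pmf ?M w)"
    using subsetD[OF sub[unfolded eqs]] by (intro integral_measure_pmf_real) auto
  thus ?thesis using assms by (simp add: tp_pmf pmf_pair)
qed
lemma E1':
  assumes "finite A" "i \<in> A"
  shows "measure_pmf.expectation (Pi_pmf A d (\<lambda>_. p)) (\<lambda>X. (f (X i)::real)) = measure_pmf.expectation p f"
proof -
  have "measure_pmf.expectation (Pi_pmf A d (\<lambda>_. p)) (\<lambda>X. f (X i)) =
        measure_pmf.expectation (map_pmf (\<lambda>X. X i) (Pi_pmf A d (\<lambda>_. p))) f"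
    by simp
  also have "map_pmf (\<lambda>X. X i) (Pi_pmf A d (\<lambda>_. p)) = p" using assms by (simp add: Pi_pmf_component)
  finally show ?thesis .
qed

lemma E2':
  assumes "finite A" "i \<in> A" "j \<in> A" "i \<noteq> j"
  shows "measure_pmf.expectation (Pi_pmf A d (\<lambda>_. p)) (\<lambda>X. (f (X i) (X j)::real)) =
     measure_pmf.expectation (pair_pmf p p) (\<lambda>(x,y). f x y)"
proof -
  have "measure_pmf.expectation (Pi_pmf A d (\<lambda>_. p)) (\<lambda>X. f (X i) (X j)) =
        measure_pmf.expectation (map_pmf (\<lambda>X. (X i, X j)) (Pi_pmf A d (\<lambda>_. p))) (\<lambda>(x,y). f x y)"
    by simp
  also have "map_pmf (\<lambda>X. (X i, X j)) (Pi_pmf A d (\<lambda>_. p)) = pair_pmf p p" using assms by (simp add: marg2)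
  finally show ?thesis .
qed

lemma E3':
  assumes "finite A" "i \<in> A" "j \<in> A" "k \<in> A" "i \<noteq> j" "i \<noteq> k" "j \<noteq> k"
  shows "measure_pmf.expectation (Pi_pmf A d (\<lambda>_. p)) (\<lambda>X. (f (X i) (X j) (X k)::real)) =
     measure_pmf.expectation (pair_pmf p (pair_pmf p p)) (\<lambda>(x,y,z). f x y z)"
proof -
  have "measure_pmf.expectation (Pi_pmf A d (\<lambda>_. p)) (\<lambda>X. f (X i) (X j) (X k)) =
        measure_pmf.expectation (map_pmf (\<lambda>X. (X i, X j, X k)) (Pi_pmf A d (\<lambda>_. p))) (\<lambda>(x,y,z). f x y z)"
    by simp
  also have "map_pmf (\<lambda>X. (X i, X j, X k)) (Pi_pmf A d (\<lambda>_. p)) = pair_pmf p (pair_pmf p p)"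
    using assms by (simp add: marg3)
  finally show ?thesis .
qed

lemma EH:
  assumes "finite A" "l \<in> A" "k \<in> A" "m \<in> A"
  shows "measure_pmf.expectation (Pi_pmf A d (\<lambda>_. p)) (\<lambda>X. (f (X l) (X k) (X m)::real)) =
    (if k = l then (if m = l then measure_pmf.expectation p (\<lambda>x. f x x x)
                    else measure_pmf.expectation (pair_pmf p p) (\<lambda>(x,y). f x x y))
     else if m = l then measure_pmf.expectation (pair_pmf p p) (\<lambda>(x,y). f x y x)
     else if m = k then measure_pmf.expectation (pair_pmf p p) (\<lambda>(x,y). f x y y)
     else measure_pmf.expectation (pair_pmf p (pair_pmf p p)) (\<lambda>(x,y,z). f x y z))"
proof -
  consider "k = l" "m = l" | "k = l" "m \<noteq> l" | "k \<noteq> l" "m = l" | "k \<noteq> l" "m \<noteq> l" "m = k"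
    | "k \<noteq> l" "m \<noteq> l" "m \<noteq> k" by blast
  then show ?thesis
  proof cases
    case 1 then show ?thesis using assms E1'[of A l d p "\<lambda>x. f x x x"] by simp
  next
    case 2 then show ?thesis using assms E2'[of A l m d p "\<lambda>x y. f x x y"] by simp
  next
    case 3 then show ?thesis using assms E2'[of A l k d p "\<lambda>x y. f x y x"] by simp
  next
    case 4 then show ?thesis using assms E2'[of A l k d p "\<lambda>x y. f x y y"] by simp
  next
    case 5 then show ?thesis using assms E3'[of A l k m d p f] by simp
  qed
qed


lemma sumA:
  assumes "finite S" "l \<in> S"
  shows "(\<Sum>k\<in>S. (if k = l then \<alpha> else \<beta>)) = \<alpha> + real (card S - 1) * (\<beta>::real)"
proof -
  have "(\<Sum>k\<in>S. (if k = l then \<alpha> else \<beta>)) = (if l = l then \<alpha> else \<beta>) + (\<Sum>k\<in>S-{l}. (if k = l then \<alpha> else \<beta>))"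
    by (rule sum.remove[OF assms])
  also have "(\<Sum>k\<in>S-{l}. (if k = l then \<alpha> else \<beta>)) = (\<Sum>k\<in>S-{l}. \<beta>)" by (rule sum.cong) auto
  also have "\<dots> = real (card S - 1) * \<beta>" using assms by simp
  finally show ?thesis by simp
qed

lemma sumB:
  assumes "finite S" "l \<in> S" "k \<in> S" "k \<noteq> l"
  shows "(\<Sum>m\<in>S. (if m = l then c3 else if m = k then c4 else c5)) = c3 + c4 + real (card S - 2) * (c5::real)"
proof -
  have "(\<Sum>m\<in>S. (if m = l then c3 else if m = k then c4 else c5)) = (if l = l then c3 else if l = k then c4 else c5) + (\<Sum>m\<in>S-{l}. (if m = l then c3 else if m = k then c4 else c5))"
    by (rule sum.remove[OF assms(1,2)])
  also have "(\<Sum>m\<in>S-{l}. (if m = l then c3 else if m = k then c4 else c5)) = (\<Sum>m\<in>S-{l}. (if m = k then c4 else c5))"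
    by (rule sum.cong) auto
  also have "\<dots> = c4 + real (card (S-{l}) - 1) * c5" using assms by (intro sumA) auto
  also have "card (S-{l}) - 1 = card S - 2" using assms by simp
  finally show ?thesis by simp
qed


lemma alg:
  fixes n :: nat and lam k0 k1 e0 e1 :: real
  assumes "n \<ge> 1"
  defines "A \<equiv> k0^2 + e0^2" and "B \<equiv> k1^2 + e1^2" and "C \<equiv> k0 * e1 + e0 * k1"
  shows "1 - 2 * (2 / real n) * lam * ((A + B) / 2 + real (n - 1) * ((A + B) / 4))
     + (2 / real n)^2 * lam^2 * (((A^2 + B^2) / 2 + real (n - 1) * ((A^2 + B^2) / 4))
        + real (n - 1) * ((A^2 + B^2) / 4 + (A^2 + 2 * C^2 + B^2) / 4 + real (n - 2) * ((A^2 + 2 * C^2 + B^2) / 8)))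
     = risk_red lam n k0 k1 e0 e1"
proof (cases "n = 1")
  case True
  then show ?thesis unfolding risk_red_def A_def B_def C_def
    by (simp add: field_simps power2_eq_square; simp add: algebra_simps)
next
  case False
  then have n2: "n \<ge> 2" using assms by simp
  have h1: "real (n - 1) = real n - 1" using assms by (simp add: of_nat_diff)
  have h2: "real (n - 2) = real n - 2" using n2 by (simp add: of_nat_diff)
  have n0: "real n > 0" using assms by simp
  show ?thesis
    unfolding risk_red_def A_def B_def C_def h1 h2
    using n0
    by (simp add: field_simps power2_eq_square; simp add: algebra_simps)
qed


lemma pointwise:
  fixes X :: "nat \<Rightarrow> real^'d" and mu0 mu1 :: "real^'d"
  defines "Am \<equiv> \<lambda>x y. (x \<bullet> mu0) * (mu0 \<bullet> y) + (x \<bullet> mu1) * (mu1 \<bullet> y)"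
  shows "(norm (X l - T_lin lam L mu0 mu1 X l))\<^sup>2 =
     X l \<bullet> X l - 2 * (2 / real L) * lam * (\<Sum>k\<in>{1..L}. Am (X l) (X k) * (X l \<bullet> X k))
     + (2 / real L)^2 * lam^2 * (\<Sum>k\<in>{1..L}. \<Sum>m\<in>{1..L}. Am (X l) (X k) * Am (X l) (X m) * (X k \<bullet> X m))"
proof -
  define T where "T = T_lin lam L mu0 mu1 X l"
  have 1: "(norm (X l - T))\<^sup>2 = X l \<bullet> X l - 2 * (X l \<bullet> T) + T \<bullet> T"
    by (simp add: power2_norm_eq_inner inner_diff_left inner_diff_right inner_commute)
  have 2: "X l \<bullet> T = (2 / real L) * lam * (\<Sum>k\<in>{1..L}. Am (X l) (X k) * (X l \<bullet> X k))"
    by (simp add: T_def T_lin_def Am_def inner_sum_right sum_distrib_left mult.assoc)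
  define w where "w = (\<lambda>k. lam * Am (X l) (X k))"
  define S where "S = (\<Sum>k\<in>{1..L}. w k *\<^sub>R X k)"
  have TS: "T = (2 / real L) *\<^sub>R S" by (simp add: T_def T_lin_def S_def w_def Am_def)
  have "S \<bullet> S = (\<Sum>k\<in>{1..L}. (w k *\<^sub>R X k) \<bullet> S)" unfolding S_def by (rule inner_sum_left)
  also have "\<dots> = (\<Sum>k\<in>{1..L}. \<Sum>m\<in>{1..L}. (w k *\<^sub>R X k) \<bullet> (w m *\<^sub>R X m))"
    unfolding S_def by (rule sum.cong) (simp_all add: inner_sum_right)
  also have "\<dots> = lam^2 * (\<Sum>k\<in>{1..L}. \<Sum>m\<in>{1..L}. Am (X l) (X k) * Am (X l) (X m) * (X k \<bullet> X m))"
    by (simp add: w_def sum_distrib_left power2_eq_square mult_ac)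
  finally have 3: "T \<bullet> T = (2 / real L)^2 * lam^2 * (\<Sum>k\<in>{1..L}. \<Sum>m\<in>{1..L}. Am (X l) (X k) * Am (X l) (X m) * (X k \<bullet> X m))"
    unfolding TS by (simp add: power2_eq_square)
  show ?thesis using 1 2 3 by (simp add: T_def)
qed


theorem proposition7:
  fixes ms0 ms1 mu0 mu1 :: "real^'d" and L :: nat and lam :: real
  assumes "CARD('d) \<ge> 2" and "L \<ge> 1" and "lam > 0"
    and "norm ms0 = 1" and "norm ms1 = 1" and "ms0 \<bullet> ms1 = 0"
  shows "risk lam L ms0 ms1 mu0 mu1 =
           risk_red lam L (ms0 \<bullet> mu0) (ms1 \<bullet> mu1) (mu1 \<bullet> ms0) (mu0 \<bullet> ms1)
         \<and> (norm mu0 = 1 \<and> norm mu1 = 1 \<longrightarrow>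
              (ms0 \<bullet> mu0) \<in> {-1..1} \<and> (ms1 \<bullet> mu1) \<in> {-1..1} \<and>
              (mu1 \<bullet> ms0) \<in> {-1..1} \<and> (mu0 \<bullet> ms1) \<in> {-1..1})"
proof
  have aa: "ms0 \<bullet> ms0 = 1" using assms(4) by (metis power2_norm_eq_inner power_one)
  have bb: "ms1 \<bullet> ms1 = 1" using assms(5) by (metis power2_norm_eq_inner power_one)
  have ab: "ms0 \<bullet> ms1 = 0" by (rule assms(6))
  have ba: "ms1 \<bullet> ms0 = 0" using assms(6) by (simp add: inner_commute)
  have neq: "ms0 \<noteq> ms1" using aa ab by auto
  define p where "p = two_point_law ms0 ms1"
  define Q where "Q = Pi_pmf {1..L} (0::real^'d) (\<lambda>_. p)"
  define Am where "Am = (\<lambda>x y::real^'d. (x \<bullet> mu0) * (mu0 \<bullet> y) + (x \<bullet> mu1) * (mu1 \<bullet> y))"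
  have Amsym: "Am ms1 ms0 = Am ms0 ms1" by (simp add: Am_def inner_commute mult.commute)
  have finp: "finite (set_pmf p)" unfolding p_def using tp_set by (rule finite_subset) simp
  have finQ: "finite (set_pmf Q)" unfolding Q_def using finp
    by (simp add: set_Pi_pmf finite_PiE_dflt)
  have intQ: "integrable (measure_pmf Q) f" for f :: "(nat \<Rightarrow> real^'d) \<Rightarrow> real"
    using finQ by (rule integrable_measure_pmf_finite)
  define g1 where "g1 = (Am ms0 ms0 + Am ms1 ms1) / 2"
  define g2 where "g2 = (Am ms0 ms0 + Am ms1 ms1) / 4"
  define h1 where "h1 = ((Am ms0 ms0)^2 + (Am ms1 ms1)^2) / 2"
  define h2 where "h2 = ((Am ms0 ms0)^2 + (Am ms1 ms1)^2) / 4"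
  define h4 where "h4 = ((Am ms0 ms0)^2 + 2 * (Am ms0 ms1)^2 + (Am ms1 ms1)^2) / 4"
  define h5 where "h5 = ((Am ms0 ms0)^2 + 2 * (Am ms0 ms1)^2 + (Am ms1 ms1)^2) / 8"
  have each: "measure_pmf.expectation Q (\<lambda>X. (norm (X l - T_lin lam L mu0 mu1 X l))\<^sup>2)
     = 1 - 2 * (2 / real L) * lam * (g1 + real (L - 1) * g2)
       + (2 / real L)^2 * lam^2 * ((h1 + real (L - 1) * h2) + real (L - 1) * (h2 + h4 + real (L - 2) * h5))"
    if l: "l \<in> {1..L}" for l
  proof -
    have E0: "measure_pmf.expectation Q (\<lambda>X. X l \<bullet> X l) = 1"
      unfolding Q_def using l E1'[of "{1..L}" l 0 p "\<lambda>x. x \<bullet> x"] tpE1[OF neq] aa bb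
      by (simp add: p_def)
    have EG: "measure_pmf.expectation Q (\<lambda>X. Am (X l) (X k) * (X l \<bullet> X k)) = (if k = l then g1 else g2)"
      if k: "k \<in> {1..L}" for k
      unfolding Q_def using l k EH[of "{1..L}" l k k 0 p "\<lambda>x y z. Am x y * (x \<bullet> y)"]
         tpE1[OF neq] tpE2[OF neq] aa bb ab ba
      by (simp add: p_def g1_def g2_def)
    have EHH: "measure_pmf.expectation Q (\<lambda>X. Am (X l) (X k) * Am (X l) (X m) * (X k \<bullet> X m)) =
       (if k = l then (if m = l then h1 else h2) else if m = l then h2 else if m = k then h4 else h5)"
      if k: "k \<in> {1..L}" and m: "m \<in> {1..L}" for k m
      unfolding Q_def using l k m EH[of "{1..L}" l k m 0 p "\<lambda>x y z. Am x y * Am x z * (y \<bullet> z)"]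
         tpE1[OF neq] tpE2[OF neq] tpE3[OF neq] aa bb ab ba Amsym
      by (simp add: p_def h1_def h2_def h4_def h5_def power2_eq_square)
    have "measure_pmf.expectation Q (\<lambda>X. (norm (X l - T_lin lam L mu0 mu1 X l))\<^sup>2)
      = measure_pmf.expectation Q (\<lambda>X. X l \<bullet> X l - 2 * (2 / real L) * lam * (\<Sum>k\<in>{1..L}. Am (X l) (X k) * (X l \<bullet> X k))
     + (2 / real L)^2 * lam^2 * (\<Sum>k\<in>{1..L}. \<Sum>m\<in>{1..L}. Am (X l) (X k) * Am (X l) (X m) * (X k \<bullet> X m)))"
      unfolding Am_def by (subst pointwise) (rule refl)
    also have "\<dots> = measure_pmf.expectation Q (\<lambda>X. X l \<bullet> X l) - 2 * (2 / real L) * lam * (\<Sum>k\<in>{1..L}. measure_pmf.expectation Q (\<lambda>X. Am (X l) (X k) * (X l \<bullet> X k)))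
     + (2 / real L)^2 * lam^2 * (\<Sum>k\<in>{1..L}. \<Sum>m\<in>{1..L}. measure_pmf.expectation Q (\<lambda>X. Am (X l) (X k) * Am (X l) (X m) * (X k \<bullet> X m)))"
      by (simp add: intQ integral_sum)
    also have "\<dots> = 1 - 2 * (2 / real L) * lam * (\<Sum>k\<in>{1..L}. (if k = l then g1 else g2))
     + (2 / real L)^2 * lam^2 * (\<Sum>k\<in>{1..L}. \<Sum>m\<in>{1..L}. (if k = l then (if m = l then h1 else h2) else if m = l then h2 else if m = k then h4 else h5))"
      using E0 EG EHH by simp
    also have "(\<Sum>k\<in>{1..L}. (if k = l then g1 else g2)) = g1 + real (L - 1) * g2"
      using l by (subst sumA) auto
    also have "(\<Sum>k\<in>{1..L}. \<Sum>m\<in>{1..L}. (if k = l then (if m = l then h1 else h2) else if m = l then h2 else if m = k then h4 else h5))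
       = (\<Sum>k\<in>{1..L}. (if k = l then h1 + real (L - 1) * h2 else h2 + h4 + real (L - 2) * h5))"
    proof (rule sum.cong)
      fix k assume k: "k \<in> {1..L}"
      show "(\<Sum>m\<in>{1..L}. (if k = l then (if m = l then h1 else h2) else if m = l then h2 else if m = k then h4 else h5))
        = (if k = l then h1 + real (L - 1) * h2 else h2 + h4 + real (L - 2) * h5)"
      proof (cases "k = l")
        case True then show ?thesis using l by (simp add: sumA)
      next
        case False then show ?thesis using l k by (simp add: sumB)
      qed
    qed simp
    also have "\<dots> = (h1 + real (L - 1) * h2) + real (L - 1) * (h2 + h4 + real (L - 2) * h5)"
      using l by (subst sumA) auto
    finally show ?thesis .
  qed
  have AA: "Am ms0 ms0 = (ms0 \<bullet> mu0)^2 + (mu1 \<bullet> ms0)^2"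
    by (simp add: Am_def inner_commute power2_eq_square)
  have BB: "Am ms1 ms1 = (ms1 \<bullet> mu1)^2 + (mu0 \<bullet> ms1)^2"
    by (simp add: Am_def inner_commute power2_eq_square)
  have AB: "Am ms0 ms1 = (ms0 \<bullet> mu0) * (mu0 \<bullet> ms1) + (mu1 \<bullet> ms0) * (ms1 \<bullet> mu1)"
    by (simp add: Am_def inner_commute)
  have R: "1 - 2 * (2 / real L) * lam * (g1 + real (L - 1) * g2)
       + (2 / real L)^2 * lam^2 * ((h1 + real (L - 1) * h2) + real (L - 1) * (h2 + h4 + real (L - 2) * h5))
     = risk_red lam L (ms0 \<bullet> mu0) (ms1 \<bullet> mu1) (mu1 \<bullet> ms0) (mu0 \<bullet> ms1)"
    unfolding g1_def g2_def h1_def h2_def h4_def h5_def AA BB AB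
    using alg[OF assms(2), of lam "ms0 \<bullet> mu0" "mu1 \<bullet> ms0" "ms1 \<bullet> mu1" "mu0 \<bullet> ms1"]
    by (simp add: algebra_simps)
  have "risk lam L ms0 ms1 mu0 mu1 = (1 / real L) * (\<Sum>l\<in>{1..L}.
     risk_red lam L (ms0 \<bullet> mu0) (ms1 \<bullet> mu1) (mu1 \<bullet> ms0) (mu0 \<bullet> ms1))"
  proof -
    have EQ: "measure_pmf.expectation Q (\<lambda>X. (norm (X l - T_lin lam L mu0 mu1 X l))\<^sup>2) =
       risk_red lam L (ms0 \<bullet> mu0) (ms1 \<bullet> mu1) (mu1 \<bullet> ms0) (mu0 \<bullet> ms1)" if "l \<in> {1..L}" for l
      by (rule trans[OF each[OF that] R])
    show ?thesis
      unfolding risk_def rows_law_def p_def[symmetric] Q_def[symmetric]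
      by (intro arg_cong[where f="\<lambda>x. (1 / real L) * x"] sum.cong refl EQ)
  qed
  also have "\<dots> = risk_red lam L (ms0 \<bullet> mu0) (ms1 \<bullet> mu1) (mu1 \<bullet> ms0) (mu0 \<bullet> ms1)"
    using assms(2) by simp
  finally show "risk lam L ms0 ms1 mu0 mu1 = risk_red lam L (ms0 \<bullet> mu0) (ms1 \<bullet> mu1) (mu1 \<bullet> ms0) (mu0 \<bullet> ms1)" .
next
  show "norm mu0 = 1 \<and> norm mu1 = 1 \<longrightarrow>
              (ms0 \<bullet> mu0) \<in> {-1..1} \<and> (ms1 \<bullet> mu1) \<in> {-1..1} \<and>
              (mu1 \<bullet> ms0) \<in> {-1..1} \<and> (mu0 \<bullet> ms1) \<in> {-1..1}"
  proof
    assume n: "norm mu0 = 1 \<and> norm mu1 = 1"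
    have c: "\<bar>x \<bullet> y\<bar> \<le> 1" if "norm x = 1" "norm y = 1" for x y :: "real^'d"
      using Cauchy_Schwarz_ineq2[of x y] that by simp
    show "(ms0 \<bullet> mu0) \<in> {-1..1} \<and> (ms1 \<bullet> mu1) \<in> {-1..1} \<and>
              (mu1 \<bullet> ms0) \<in> {-1..1} \<and> (mu0 \<bullet> ms1) \<in> {-1..1}"
      using c[of ms0 mu0] c[of ms1 mu1] c[of mu1 ms0] c[of mu0 ms1] n assms(4,5)
      by (auto simp: abs_le_iff)
  qed
qed

end
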